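(* Let $n\ge 3$, $m\ge 1$, and let $f=x_0^{a_0}x_1^{a_1}\cdots x_n^{a_n}x_{n+1}^{a_{n+1}}$ be a monomial. If $f\in I_{B_n}^{(m)}$, then $g=x_0^{t}x_1^{a_1}\cdots x_n^{a_n}x_{n+1}^{t}\in I_{B_n}^{(m)}$, where $t=\min\{a_0,a_{n+1}\}$.
   Context: Let $k$ be a field. $Q_n$ is the cycle graph on vertices $1,\dots,n$ (edges $\{i,i+1\}$ for $1\le i\le n-1$ and $\{n,1\}$). $B_n$ is the simplicial complex on $\{0,\dots,n+1\}$ with facets $\{0,i,j\}$ and $\{n+1,i,j\}$ for each edge $\{i,j\}$ of $Q_n$ (boundary of the bipyramid over $Q_n$), and $I_{B_n}\subset k[x_0,\dots,x_{n+1}]$ is its Stanley-Reisner ideal, generated by $\prod_{i\in\tau}x_i$ over non-faces $\tau$ of $B_n$. For a homogeneous ideal $I$ of $R$, $I^{(m)}=R\cap\bigcap_{P\in\mathrm{Ass}(I)}I^mR_P$. *)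

theory Defs
  imports Main "HOL-Library.Poly_Mapping"
begin

text \<open>Polynomials in variables x_0, x_1, ... over 'k: monomials are exponent vectors
  (nat to nat, finitely supported), polynomials are finitely supported coefficient functions on them.\<close>

type_synonym 'k mpoly = "(nat \<Rightarrow>\<^sub>0 nat) \<Rightarrow>\<^sub>0 'k"

definition Var :: "nat \<Rightarrow> 'k::comm_ring_1 mpoly" where
  "Var i = Poly_Mapping.single (Poly_Mapping.single i 1) 1"

definition polyring :: "nat \<Rightarrow> 'k::comm_ring_1 mpoly set" where
  "polyring N = {p :: 'k mpoly. \<forall>mon \<in> Poly_Mapping.keys p. \<forall>i \<in> Poly_Mapping.keys mon. i \<le> N}"

definition gen_ideal :: "nat \<Rightarrow> 'k::comm_ring_1 mpoly set \<Rightarrow> 'k mpoly set" where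
  "gen_ideal N G = {p. \<exists>S c. finite S \<and> S \<subseteq> G \<and> (\<forall>g\<in>S. c g \<in> polyring N)
                         \<and> p = (\<Sum>g\<in>S. c g * g)}"

definition is_ideal :: "nat \<Rightarrow> 'k::comm_ring_1 mpoly set \<Rightarrow> bool" where
  "is_ideal N I \<longleftrightarrow> I \<subseteq> polyring N \<and> 0 \<in> I \<and> (\<forall>a\<in>I. \<forall>b\<in>I. a + b \<in> I)
                   \<and> (\<forall>r\<in>polyring N. \<forall>a\<in>I. r * a \<in> I)"

definition is_prime_ideal :: "nat \<Rightarrow> 'k::comm_ring_1 mpoly set \<Rightarrow> bool" where
  "is_prime_ideal N P \<longleftrightarrow> is_ideal N P \<and> P \<noteq> polyring N \<and>
     (\<forall>a\<in>polyring N. \<forall>b\<in>polyring N. a * b \<in> P \<longrightarrow> a \<in> P \<or> b \<in> P)"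

definition ideal_power :: "nat \<Rightarrow> 'k::comm_ring_1 mpoly set \<Rightarrow> nat \<Rightarrow> 'k mpoly set" where
  "ideal_power N I m = gen_ideal N {prod_list l | l. length l = m \<and> set l \<subseteq> I}"

definition Ass :: "nat \<Rightarrow> 'k::comm_ring_1 mpoly set \<Rightarrow> 'k mpoly set set" where
  "Ass N I = {P. is_prime_ideal N P \<and> (\<exists>r\<in>polyring N. P = {a \<in> polyring N. a * r \<in> I})}"

text \<open>Symbolic power I^(m) = R \<inter> \<Inter>_{P\<in>Ass I} I^m R_P. Since R is a domain, f \<in> R lies in
  I^m R_P iff s*f \<in> I^m for some s \<in> R - P.\<close>
definition symbolic_power :: "nat \<Rightarrow> 'k::comm_ring_1 mpoly set \<Rightarrow> nat \<Rightarrow> 'k mpoly set" where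
  "symbolic_power N I m = {f \<in> polyring N. \<forall>P \<in> Ass N I.
       \<exists>s \<in> polyring N - P. s * f \<in> ideal_power N I m}"

definition Q_edges :: "nat \<Rightarrow> nat set set" where
  "Q_edges n = {{i, i + 1} | i. 1 \<le> i \<and> i \<le> n - 1} \<union> {{n, 1}}"

text \<open>Facets of B_n (boundary of bipyramid), on vertex set {0..n+1}.\<close>
definition B_facets :: "nat \<Rightarrow> nat set set" where
  "B_facets n = {insert 0 e | e. e \<in> Q_edges n} \<union> {insert (n + 1) e | e. e \<in> Q_edges n}"

definition B_face :: "nat \<Rightarrow> nat set \<Rightarrow> bool" where
  "B_face n \<sigma> \<longleftrightarrow> (\<exists>F \<in> B_facets n. \<sigma> \<subseteq> F)"

definition I_B :: "nat \<Rightarrow> 'k::comm_ring_1 mpoly set" where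
  "I_B n = gen_ideal (n + 1) {(\<Prod>i\<in>\<tau>. Var i) | \<tau>. \<tau> \<subseteq> {0..n + 1} \<and> \<not> B_face n \<tau>}"

definition monom :: "nat \<Rightarrow> (nat \<Rightarrow> nat) \<Rightarrow> 'k::comm_ring_1 mpoly" where
  "monom N a = (\<Prod>i\<in>{0..N}. Var i ^ a i)"

end

theory Submission
  imports Defs
begin

lemma polyring_iff: "p \<in> polyring N \<longleftrightarrow> (\<forall>mon\<in>Poly_Mapping.keys p. Poly_Mapping.keys mon \<subseteq> {..N})"
  unfolding polyring_def by auto

lemma keys_add_nat: "Poly_Mapping.keys ((a::'a \<Rightarrow>\<^sub>0 nat) + b) = Poly_Mapping.keys a \<union> Poly_Mapping.keys b"
  by (auto simp: in_keys_iff lookup_add)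

lemma polyring_zero: "0 \<in> polyring N"
  by (simp add: polyring_iff)

lemma polyring_one: "(1::'k::comm_ring_1 mpoly) \<in> polyring N"
  by (simp add: polyring_iff)

lemma polyring_add: "a \<in> polyring N \<Longrightarrow> b \<in> polyring N \<Longrightarrow> a + b \<in> polyring N"
  unfolding polyring_iff using keys_add[of a b] by blast

lemma polyring_uminus: "a \<in> polyring N \<Longrightarrow> - (a::'k::comm_ring_1 mpoly) \<in> polyring N"
  unfolding polyring_iff by (auto simp: in_keys_iff)

lemma polyring_mult: "a \<in> polyring N \<Longrightarrow> b \<in> polyring N \<Longrightarrow> (a::'k::comm_ring_1 mpoly) * b \<in> polyring N"
  unfolding polyring_iff
proof
  fix mon assume A: "\<forall>mon\<in>Poly_Mapping.keys a. Poly_Mapping.keys mon \<subseteq> {..N}"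
    and B: "\<forall>mon\<in>Poly_Mapping.keys b. Poly_Mapping.keys mon \<subseteq> {..N}"
    and m: "mon \<in> Poly_Mapping.keys (a * b)"
  then obtain x y where "mon = x + y" "x \<in> Poly_Mapping.keys a" "y \<in> Poly_Mapping.keys b"
    using keys_mult[of a b] by blast
  then show "Poly_Mapping.keys mon \<subseteq> {..N}" using A B by (auto simp: keys_add_nat)
qed

lemma polyring_diff: "a \<in> polyring N \<Longrightarrow> b \<in> polyring N \<Longrightarrow> (a::'k::comm_ring_1 mpoly) - b \<in> polyring N"
  using polyring_add[OF _ polyring_uminus] by (metis diff_conv_add_uminus)

lemma polyring_Var: "i \<le> N \<Longrightarrow> (Var i :: 'k::comm_ring_1 mpoly) \<in> polyring N"
  by (simp add: polyring_iff Var_def)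

lemma polyring_power: "a \<in> polyring N \<Longrightarrow> (a::'k::comm_ring_1 mpoly) ^ d \<in> polyring N"
  by (induction d) (auto intro: polyring_mult polyring_one)

lemma polyring_prod: "(\<And>i. i \<in> A \<Longrightarrow> f i \<in> polyring N) \<Longrightarrow> (prod f A :: 'k::comm_ring_1 mpoly) \<in> polyring N"
  by (induction A rule: infinite_finite_induct) (auto intro: polyring_mult polyring_one)

lemma polyring_sum: "(\<And>i. i \<in> A \<Longrightarrow> f i \<in> polyring N) \<Longrightarrow> (sum f A :: 'k::comm_ring_1 mpoly) \<in> polyring N"
  by (induction A rule: infinite_finite_induct) (auto intro: polyring_add polyring_zero)

lemma polyring_monom: "(monom N a :: 'k::comm_ring_1 mpoly) \<in> polyring N"
  unfolding monom_def by (auto intro!: polyring_prod polyring_power polyring_Var)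

lemma polyring_single: "Poly_Mapping.keys mon \<subseteq> {..N} \<Longrightarrow> Poly_Mapping.single mon c \<in> polyring N"
  by (simp add: polyring_iff)

lemma gi_intro:
  assumes "finite S" "S \<subseteq> G" "\<forall>g\<in>S. c g \<in> polyring N" "p = (\<Sum>g\<in>S. c g * g)"
  shows "p \<in> gen_ideal N G"
  unfolding gen_ideal_def mem_Collect_eq
  apply (rule_tac x="S" in exI)
  apply (rule_tac x="c" in exI)
  using assms by simp

lemma gi_zero: "0 \<in> gen_ideal N G"
proof -
  have "finite {} \<and> {} \<subseteq> G \<and> (\<forall>g\<in>{}. (\<lambda>_. 0) g \<in> polyring N) \<and> 0 = (\<Sum>g\<in>{}. (\<lambda>_. 0) g * g)"
    by simp
  then show ?thesis unfolding gen_ideal_def mem_Collect_eq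
    apply (rule_tac x="{}" in exI)
    apply (rule_tac x="\<lambda>_. 0" in exI)
    by assumption
qed

lemma gi_gen: assumes "g \<in> G" "c \<in> polyring N" shows "c * g \<in> gen_ideal N G"
proof -
  have "finite {g} \<and> {g} \<subseteq> G \<and> (\<forall>h\<in>{g}. (\<lambda>_. c) h \<in> polyring N) \<and> c * g = (\<Sum>h\<in>{g}. (\<lambda>_. c) h * h)"
    using assms by simp
  then show ?thesis unfolding gen_ideal_def mem_Collect_eq
    apply (rule_tac x="{g}" in exI)
    apply (rule_tac x="\<lambda>_. c" in exI)
    by assumption
qed

lemma gi_add: assumes "a \<in> gen_ideal N G" "b \<in> gen_ideal N G" shows "a + b \<in> gen_ideal N G"
proof -
  obtain S1 c1 where 1: "finite S1" "S1 \<subseteq> G" "\<forall>g\<in>S1. c1 g \<in> polyring N" "a = (\<Sum>g\<in>S1. c1 g * g)"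
    using assms(1) unfolding gen_ideal_def by blast
  obtain S2 c2 where 2: "finite S2" "S2 \<subseteq> G" "\<forall>g\<in>S2. c2 g \<in> polyring N" "b = (\<Sum>g\<in>S2. c2 g * g)"
    using assms(2) unfolding gen_ideal_def by blast
  define c where "c g = (if g \<in> S1 then c1 g else 0) + (if g \<in> S2 then c2 g else 0)" for g
  have "(\<Sum>g\<in>S1 \<union> S2. c g * g) = (\<Sum>g\<in>S1 \<union> S2. (if g \<in> S1 then c1 g * g else 0)) + (\<Sum>g\<in>S1 \<union> S2. (if g \<in> S2 then c2 g * g else 0))"
    unfolding c_def sum.distrib[symmetric] by (rule sum.cong) (auto simp: distrib_right)
  also have "\<dots> = a + b"
    using 1 2 by (simp add: sum.If_cases Int_absorb1 Int_absorb2 inf_commute[of "S1 \<union> S2"] Int_Un_distrib2)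
  finally have "a + b = (\<Sum>g\<in>S1 \<union> S2. c g * g)" by simp
  moreover have "\<forall>g\<in>S1 \<union> S2. c g \<in> polyring N"
    using 1 2 by (auto simp: c_def intro!: polyring_add polyring_zero)
  ultimately show ?thesis using 1 2 by (intro gi_intro[of "S1 \<union> S2" _ c]) auto
qed

lemma gi_mult: assumes "r \<in> polyring N" "a \<in> gen_ideal N G" shows "r * a \<in> gen_ideal N G"
proof -
  obtain S c where 1: "finite S" "S \<subseteq> G" "\<forall>g\<in>S. c g \<in> polyring N" "a = (\<Sum>g\<in>S. c g * g)"
    using assms(2) unfolding gen_ideal_def by blast
  have "r * a = (\<Sum>g\<in>S. (r * c g) * g)" using 1 by (simp add: sum_distrib_left mult.assoc)
  moreover have "\<forall>g\<in>S. r * c g \<in> polyring N" using 1 assms(1) by (auto intro: polyring_mult)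
  ultimately show ?thesis using 1 by (intro gi_intro[of S _ "\<lambda>g. r * c g"]) auto
qed

lemma gi_sum: "(\<And>i. i \<in> A \<Longrightarrow> f i \<in> gen_ideal N G) \<Longrightarrow> sum f A \<in> gen_ideal N G"
  by (induction A rule: infinite_finite_induct) (auto intro: gi_add gi_zero)

lemma gi_uminus: "a \<in> gen_ideal N G \<Longrightarrow> - (a::'k::comm_ring_1 mpoly) \<in> gen_ideal N G"
  using gi_mult[OF polyring_uminus[OF polyring_one]] by fastforce

lemma gi_diff: "a \<in> gen_ideal N G \<Longrightarrow> b \<in> gen_ideal N G \<Longrightarrow> (a::'k::comm_ring_1 mpoly) - b \<in> gen_ideal N G"
  by (metis diff_conv_add_uminus gi_add gi_uminus)

definition ind :: "nat set \<Rightarrow> (nat \<Rightarrow>\<^sub>0 nat)" where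
  "ind \<tau> = (\<Sum>i\<in>\<tau>. Poly_Mapping.single i 1)"

lemma lookup_ind: "finite \<tau> \<Longrightarrow> Poly_Mapping.lookup (ind \<tau>) j = (if j \<in> \<tau> then 1 else 0)"
  unfolding ind_def by (simp add: lookup_sum lookup_single when_def)

lemma keys_ind: "finite \<tau> \<Longrightarrow> Poly_Mapping.keys (ind \<tau>) = \<tau>"
  by (auto simp: in_keys_iff lookup_ind split: if_splits)

lemma prod_Var: "finite \<tau> \<Longrightarrow> (\<Prod>i\<in>\<tau>. Var i) = (Poly_Mapping.single (ind \<tau>) 1 :: 'k::comm_ring_1 mpoly)"
proof (induction \<tau> rule: finite_induct)
  case empty then show ?case by (simp add: ind_def)
next
  case (insert x F)
  then show ?case by (simp add: ind_def Var_def mult_single)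
qed

lemma poly_decomp: "p = (\<Sum>a\<in>Poly_Mapping.keys p. Poly_Mapping.single a (Poly_Mapping.lookup p a))"
proof (rule poly_mapping_eqI)
  fix k
  show "Poly_Mapping.lookup p k = Poly_Mapping.lookup (\<Sum>a\<in>Poly_Mapping.keys p. Poly_Mapping.single a (Poly_Mapping.lookup p a)) k"
    by (simp add: lookup_sum lookup_single when_def in_keys_iff)
qed

lemma lookup_shift: "Poly_Mapping.lookup (Poly_Mapping.single m 1 * (p :: 'k::comm_ring_1 mpoly)) (m + k) = Poly_Mapping.lookup p k"
proof -
  have "Poly_Mapping.single m 1 * p = (\<Sum>a\<in>Poly_Mapping.keys p. Poly_Mapping.single (m + a) (Poly_Mapping.lookup p a))"
    by (subst poly_decomp[of p]) (simp add: sum_distrib_left mult_single)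
  then show ?thesis
    by (simp add: lookup_sum lookup_single when_def in_keys_iff)
qed

definition nonface :: "nat \<Rightarrow> nat set \<Rightarrow> bool" where
  "nonface n \<tau> \<longleftrightarrow> \<tau> \<subseteq> {0..n+1} \<and> \<not> B_face n \<tau>"

lemma I_B_alt: "I_B n = gen_ideal (n+1) {(\<Prod>i\<in>\<tau>. Var i) | \<tau>. nonface n \<tau>}"
  unfolding I_B_def nonface_def by simp

lemma keys_sum_sub: "k \<in> Poly_Mapping.keys (sum f S) \<Longrightarrow> \<exists>g\<in>S. k \<in> Poly_Mapping.keys (f g)"
  by (auto simp: in_keys_iff lookup_sum elim: sum.not_neutral_contains_not_neutral)

lemma IB_keys:
  assumes "(p::'k::comm_ring_1 mpoly) \<in> I_B n" "k \<in> Poly_Mapping.keys p"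
  shows "\<exists>\<tau>. nonface n \<tau> \<and> \<tau> \<subseteq> Poly_Mapping.keys k"
proof -
  obtain S c where 1: "finite S" "S \<subseteq> {(\<Prod>i\<in>\<tau>. Var i) | \<tau>. nonface n \<tau>}" "p = (\<Sum>g\<in>S. c g * g)"
    using assms(1) unfolding I_B_alt gen_ideal_def by blast
  have "k \<in> Poly_Mapping.keys (\<Sum>g\<in>S. c g * g)" using assms(2) 1(3) by simp
  from keys_sum_sub[OF this] obtain g where g: "g \<in> S" "k \<in> Poly_Mapping.keys (c g * g)" by blast
  obtain \<tau> where t: "nonface n \<tau>" "g = (\<Prod>i\<in>\<tau>. Var i)" using 1(2) g(1) by blast
  have ft: "finite \<tau>" using t(1) unfolding nonface_def using finite_subset by blast
  have "g = Poly_Mapping.single (ind \<tau>) 1" using prod_Var[OF ft] t(2) by simp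
  then obtain x where "k = x + ind \<tau>" using keys_mult[of "c g" g] g(2) by auto
  then have "\<tau> \<subseteq> Poly_Mapping.keys k" using keys_ind[OF ft] by (simp add: keys_add_nat)
  then show ?thesis using t by blast
qed

lemma IB_single:
  assumes "nonface n \<tau>" "\<tau> \<subseteq> Poly_Mapping.keys k" "Poly_Mapping.keys k \<subseteq> {..n+1}"
  shows "(Poly_Mapping.single k c :: 'k::comm_ring_1 mpoly) \<in> I_B n"
proof -
  have ft: "finite \<tau>" using assms(1) unfolding nonface_def using finite_subset by blast
  have le: "Poly_Mapping.lookup (ind \<tau>) i \<le> Poly_Mapping.lookup k i" for i
    using assms(2) by (auto simp: lookup_ind[OF ft] in_keys_iff)
  have k: "k = (k - ind \<tau>) + ind \<tau>"
    by (rule poly_mapping_eqI) (use le in \<open>simp add: lookup_add lookup_minus\<close>)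
  have "Poly_Mapping.single k c = Poly_Mapping.single (k - ind \<tau>) c * (\<Prod>i\<in>\<tau>. Var i)"
    by (subst k) (simp add: prod_Var[OF ft] mult_single)
  moreover have "Poly_Mapping.keys (k - ind \<tau>) \<subseteq> Poly_Mapping.keys k"
    by (auto simp: in_keys_iff lookup_minus)
  then have "Poly_Mapping.keys (k - ind \<tau>) \<subseteq> {..n+1}" using assms(3) by blast
  ultimately show ?thesis unfolding I_B_alt
    by (auto intro!: gi_gen polyring_single assms(1))
qed

lemma prime_one: "is_prime_ideal N P \<Longrightarrow> (1::'k::comm_ring_1 mpoly) \<notin> P"
  unfolding is_prime_ideal_def is_ideal_def using polyring_one by (metis mult.right_neutral subsetI subset_antisym)

lemma prime_power: "is_prime_ideal N P \<Longrightarrow> x \<in> polyring N \<Longrightarrow> x \<notin> P \<Longrightarrow> (x::'k::comm_ring_1 mpoly) ^ d \<notin> P"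
proof (induction d)
  case 0 then show ?case using prime_one by simp
next
  case (Suc d)
  then show ?case unfolding is_prime_ideal_def by (metis polyring_power power_Suc)
qed

lemma Ass_not_both:
  assumes "n \<ge> 1" "P \<in> Ass (n+1) (I_B n :: 'k::comm_ring_1 mpoly set)"
  shows "Var 0 \<notin> P \<or> Var (n+1) \<notin> P"
proof (rule ccontr)
  assume "\<not> ?thesis"
  then have V: "Var 0 \<in> P" "Var (n+1) \<in> P" by auto
  obtain r where pr: "is_prime_ideal (n+1) P" and r: "r \<in> polyring (n+1)"
    and P: "P = {a \<in> polyring (n+1). a * r \<in> I_B n}"
    using assms(2) unfolding Ass_def by blast
  define Div where "Div (k::nat \<Rightarrow>\<^sub>0 nat) \<longleftrightarrow> (\<exists>\<tau>. nonface n \<tau> \<and> \<tau> \<subseteq> Poly_Mapping.keys k)" for k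
  define r1 where "r1 = (\<Sum>k\<in>{k\<in>Poly_Mapping.keys r. Div k}. Poly_Mapping.single k (Poly_Mapping.lookup r k))"
  have r1: "r1 \<in> I_B n" unfolding r1_def
  proof (rule gi_sum[where G="{(\<Prod>i\<in>\<tau>. Var i) | \<tau>. nonface n \<tau>}" and N="n+1", folded I_B_alt])
    fix k assume k: "k \<in> {k\<in>Poly_Mapping.keys r. Div k}"
    then have "Poly_Mapping.keys k \<subseteq> {..n+1}" using r unfolding polyring_iff by blast
    then show "Poly_Mapping.single k (Poly_Mapping.lookup r k) \<in> I_B n"
      using k IB_single unfolding Div_def by blast
  qed
  define r2 where "r2 = r - r1"
  have "1 \<notin> P" using prime_one[OF pr] .
  then have "r \<notin> I_B n" using P polyring_one by fastforce
  have "r2 \<notin> I_B n"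
  proof
    assume "r2 \<in> I_B n"
    then have "r1 + r2 \<in> I_B n" using r1 gi_add unfolding I_B_def by blast
    moreover have "r1 + r2 = r" by (simp add: r2_def)
    ultimately show False using \<open>r \<notin> I_B n\<close> by simp
  qed
  moreover have "0 \<in> I_B n" unfolding I_B_def by (rule gi_zero)
  ultimately have "r2 \<noteq> 0" by auto
  have "Poly_Mapping.keys r2 \<noteq> {}"
  proof
    assume "Poly_Mapping.keys r2 = {}"
    then have "\<forall>x. Poly_Mapping.lookup r2 x = 0" by (auto simp: in_keys_iff)
    then have "r2 = 0" by (intro poly_mapping_eqI) simp
    then show False using \<open>r2 \<noteq> 0\<close> by simp
  qed
  then obtain k where k2: "k \<in> Poly_Mapping.keys r2" by blast
  have lr1: "Poly_Mapping.lookup r1 k = (if k \<in> Poly_Mapping.keys r \<and> Div k then Poly_Mapping.lookup r k else 0)"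
    unfolding r1_def by (simp add: lookup_sum lookup_single when_def)
  have kr: "k \<in> Poly_Mapping.keys r" and nd: "\<not> Div k"
    using k2 lr1 by (auto simp: r2_def in_keys_iff lookup_minus split: if_splits)
  have kN: "Poly_Mapping.keys k \<subseteq> {..n+1}" using kr r unfolding polyring_iff by blast
  have kN': "Poly_Mapping.keys k \<subseteq> {0..n+1}" using kN by auto
  have "\<not> (nonface n (Poly_Mapping.keys k) \<and> Poly_Mapping.keys k \<subseteq> Poly_Mapping.keys k)"
    using nd unfolding Div_def by blast
  then have face: "B_face n (Poly_Mapping.keys k)" using kN' unfolding nonface_def by blast
  have ext: "\<exists>\<tau>. nonface n \<tau> \<and> \<tau> \<subseteq> insert j (Poly_Mapping.keys k)" if j: "j \<le> n+1" "Var j \<in> P" for j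
  proof -
    have "Var j * r \<in> I_B n" using j P by blast
    moreover have "Var j * r1 \<in> I_B n" using r1 polyring_Var[OF j(1)] gi_mult unfolding I_B_def by blast
    ultimately have A0: "Var j * r - Var j * r1 \<in> I_B n" unfolding I_B_def by (rule gi_diff)
    have "Var j * r2 = Var j * r - Var j * r1" by (simp add: r2_def right_diff_distrib)
    with A0 have A: "Var j * r2 \<in> I_B n" by simp
    have "Poly_Mapping.lookup (Var j * r2) (Poly_Mapping.single j 1 + k) = Poly_Mapping.lookup r2 k"
      unfolding Var_def by (rule lookup_shift)
    then have "Poly_Mapping.single j 1 + k \<in> Poly_Mapping.keys (Var j * r2)" using k2 by (simp add: in_keys_iff)
    from IB_keys[OF A this] show ?thesis by (simp add: keys_add_nat)
  qed
  obtain \<tau>0 where t0: "nonface n \<tau>0" "\<tau>0 \<subseteq> insert 0 (Poly_Mapping.keys k)" using ext V by auto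
  obtain \<tau>1 where t1: "nonface n \<tau>1" "\<tau>1 \<subseteq> insert (n+1) (Poly_Mapping.keys k)" using ext V by auto
  obtain F where F: "F \<in> B_facets n" "Poly_Mapping.keys k \<subseteq> F" using face unfolding B_face_def by blast
  then obtain e x where Fe: "F = insert x e" "x = 0 \<or> x = n+1" "e \<in> Q_edges n"
    unfolding B_facets_def by blast
  show False
  proof (cases "x = 0")
    case True
    then have "\<tau>0 \<subseteq> F" using t0 F Fe by auto
    then show False using t0 F unfolding nonface_def B_face_def by blast
  next
    case False
    then have "\<tau>1 \<subseteq> F" using t1 F Fe by auto
    then show False using t1 F unfolding nonface_def B_face_def by blast
  qed
qed


definition tau :: "nat \<Rightarrow> nat \<Rightarrow> nat" where
  "tau N i = (if i = 0 then N else if i = N then 0 else i)"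

lemma tau_tau [simp]: "tau N (tau N i) = i"
  unfolding tau_def by auto

lemma inj_tau: "inj (tau N)"
  by (metis injI tau_tau)

lemma tau_le: "i \<le> N \<Longrightarrow> tau N i \<le> N"
  unfolding tau_def by auto

definition rho :: "nat \<Rightarrow> (nat \<Rightarrow>\<^sub>0 nat) \<Rightarrow> (nat \<Rightarrow>\<^sub>0 nat)" where
  "rho N mon = Poly_Mapping.map_key (tau N) mon"

lemma rho_rho [simp]: "rho N (rho N x) = x"
proof -
  have "tau N \<circ> tau N = (\<lambda>x. x)" by (auto simp: fun_eq_iff)
  then show ?thesis unfolding rho_def using map_key_compose[OF inj_tau inj_tau] map_key_id by metis
qed

lemma inj_rho: "inj (rho N)"
  by (metis injI rho_rho)

lemma rho_add: "rho N (a + b) = rho N a + rho N b"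
  unfolding rho_def by (rule map_key_plus[OF inj_tau])

lemma rho_single: "rho N (Poly_Mapping.single i c) = Poly_Mapping.single (tau N i) c"
  unfolding rho_def by (metis map_key_single[OF inj_tau] tau_tau)

lemma keys_rho: "Poly_Mapping.keys (rho N mon) = tau N -` Poly_Mapping.keys mon"
  unfolding rho_def by (rule keys_map_key[OF inj_tau])

definition sig :: "nat \<Rightarrow> 'k::comm_ring_1 mpoly \<Rightarrow> 'k mpoly" where
  "sig N p = Poly_Mapping.map_key (rho N) p"

lemma sig_sig [simp]: "sig N (sig N x) = x"
proof -
  have "rho N \<circ> rho N = (\<lambda>x. x)" by (auto simp: fun_eq_iff)
  then show ?thesis unfolding sig_def using map_key_compose[OF inj_rho inj_rho] map_key_id by metis
qed

lemma sig_add: "sig N (a + b) = sig N a + sig N b"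
  unfolding sig_def by (rule map_key_plus[OF inj_rho])

lemma sig_zero [simp]: "sig N 0 = 0"
  unfolding sig_def by (rule map_key_zero[OF inj_rho])

lemma sig_single: "sig N (Poly_Mapping.single a c) = Poly_Mapping.single (rho N a) c"
  unfolding sig_def by (metis map_key_single[OF inj_rho] rho_rho)

lemma keys_sig: "Poly_Mapping.keys (sig N p) = rho N -` Poly_Mapping.keys p"
  unfolding sig_def by (rule keys_map_key[OF inj_rho])

lemma sig_sum: "sig N (sum f A) = (\<Sum>x\<in>A. sig N (f x))"
  by (induction A rule: infinite_finite_induct) (auto simp: sig_add)

lemma sig_mult: "sig N (p * q) = sig N p * sig N q"
proof -
  have "p * q = (\<Sum>a\<in>Poly_Mapping.keys p. \<Sum>b\<in>Poly_Mapping.keys q.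
      Poly_Mapping.single a (Poly_Mapping.lookup p a) * Poly_Mapping.single b (Poly_Mapping.lookup q b))"
    by (subst poly_decomp[of p], subst poly_decomp[of q]) (rule sum_product)
  then have "sig N (p * q) = (\<Sum>a\<in>Poly_Mapping.keys p. \<Sum>b\<in>Poly_Mapping.keys q.
      sig N (Poly_Mapping.single a (Poly_Mapping.lookup p a)) * sig N (Poly_Mapping.single b (Poly_Mapping.lookup q b)))"
    by (simp add: sig_sum mult_single sig_single rho_add)
  also have "\<dots> = sig N p * sig N q"
    by (subst (3) poly_decomp[of p], subst (3) poly_decomp[of q]) (simp add: sig_sum sum_product)
  finally show ?thesis .
qed

lemma sig_one [simp]: "sig N 1 = 1"
proof -
  have "rho N 0 = 0" using rho_add[of N 0 0] by simp
  then show ?thesis using sig_single[of N 0 1] by simp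
qed

lemma sig_prod: "sig N (prod f A) = (\<Prod>x\<in>A. sig N (f x))"
  by (induction A rule: infinite_finite_induct) (auto simp: sig_mult)

lemma sig_prod_list: "sig N (prod_list l) = prod_list (map (sig N) l)"
  by (induction l) (auto simp: sig_mult)

lemma sig_power: "sig N (p ^ d) = sig N p ^ d"
  by (induction d) (auto simp: sig_mult)

lemma sig_Var: "sig N (Var i) = Var (tau N i)"
  unfolding Var_def by (simp add: sig_single rho_single)

lemma sig_polyring: "p \<in> polyring N \<Longrightarrow> sig N p \<in> polyring N"
proof -
  assume p: "p \<in> polyring N"
  show ?thesis unfolding polyring_iff
  proof (intro ballI subsetI)
    fix mon i assume mon: "mon \<in> Poly_Mapping.keys (sig N p)" and i: "i \<in> Poly_Mapping.keys mon"
    have "rho N mon \<in> Poly_Mapping.keys p" using mon by (simp add: keys_sig)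
    then have "Poly_Mapping.keys (rho N mon) \<subseteq> {..N}" using p unfolding polyring_iff by blast
    moreover have "tau N i \<in> Poly_Mapping.keys (rho N mon)" using i by (simp add: keys_rho)
    ultimately have "tau N i \<le> N" by auto
    then have "tau N (tau N i) \<le> N" by (rule tau_le)
    then show "i \<in> {..N}" by simp
  qed
qed

lemma sig_monom: "sig N (monom N a) = monom N (a \<circ> tau N)"
proof -
  have "sig N (monom N a) = (\<Prod>i\<in>{0..N}. Var (tau N i) ^ a i)"
    unfolding monom_def by (simp add: sig_prod sig_power sig_Var)
  also have "\<dots> = (\<Prod>j\<in>tau N ` {0..N}. Var j ^ a (tau N j))"
  proof -
    have inj: "inj_on (tau N) {0..N}" using inj_on_subset[OF inj_tau subset_UNIV] .
    show ?thesis by (simp add: prod.reindex[OF inj])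
  qed
  also have "tau N ` {0..N} = {0..N}"
  proof
    show "tau N ` {0..N} \<subseteq> {0..N}" using tau_le by auto
    show "{0..N} \<subseteq> tau N ` {0..N}"
    proof
      fix x assume x: "x \<in> {0..N}"
      show "x \<in> tau N ` {0..N}" by (rule image_eqI[of _ _ "tau N x"]) (use x tau_le in auto)
    qed
  qed
  finally show ?thesis unfolding monom_def by simp
qed


lemma sig_gen_ideal:
  assumes "\<And>g. g \<in> G \<Longrightarrow> sig N g \<in> G" "a \<in> gen_ideal N G"
  shows "sig N a \<in> gen_ideal N G"
proof -
  obtain S c where 1: "finite S" "S \<subseteq> G" "\<forall>g\<in>S. c g \<in> polyring N" "a = (\<Sum>g\<in>S. c g * g)"
    using assms(2) unfolding gen_ideal_def by blast
  have "sig N a = (\<Sum>g\<in>S. sig N (c g) * sig N g)" using 1(4) by (simp add: sig_sum sig_mult)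
  also have "\<dots> \<in> gen_ideal N G"
    using 1 assms(1) by (auto intro!: gi_sum gi_gen sig_polyring)
  finally show ?thesis .
qed

lemma Q_edges_sub: "e \<in> Q_edges n \<Longrightarrow> n \<ge> 1 \<Longrightarrow> e \<subseteq> {1..n}"
  unfolding Q_edges_def by auto

lemma facet_tau:
  assumes "F \<in> B_facets n" "n \<ge> 1" shows "tau (n+1) ` F \<in> B_facets n"
proof -
  obtain x e where Fe: "F = insert x e" "x = 0 \<or> x = n+1" "e \<in> Q_edges n"
    using assms(1) unfolding B_facets_def by blast
  have "\<forall>i\<in>e. tau (n+1) i = i" using Q_edges_sub[OF Fe(3) assms(2)]
    by (auto simp: tau_def)
  then have "tau (n+1) ` e = (\<lambda>i. i) ` e" by (intro image_cong) auto
  then have "tau (n+1) ` e = e" by simp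
  then have "tau (n+1) ` F = insert (tau (n+1) x) e" using Fe by simp
  moreover have "tau (n+1) x = 0 \<or> tau (n+1) x = n+1" using Fe(2) by (auto simp: tau_def)
  moreover have "insert 0 e \<in> B_facets n" "insert (n+1) e \<in> B_facets n"
    unfolding B_facets_def using Fe(3) by blast+
  ultimately show ?thesis by metis
qed

lemma nonface_tau:
  assumes "nonface n \<tau>" "n \<ge> 1" shows "nonface n (tau (n+1) ` \<tau>)"
proof -
  have "\<tau> \<subseteq> {0..n+1}" using assms(1) unfolding nonface_def by blast
  then have "tau (n+1) ` \<tau> \<subseteq> {0..n+1}" using tau_le[of _ "n+1"] by auto
  moreover have "\<not> B_face n (tau (n+1) ` \<tau>)"
  proof
    assume "B_face n (tau (n+1) ` \<tau>)"
    then obtain F where F: "F \<in> B_facets n" "tau (n+1) ` \<tau> \<subseteq> F" unfolding B_face_def by blast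
    have "tau (n+1) ` F \<in> B_facets n" using facet_tau[OF F(1) assms(2)] .
    moreover have "\<tau> \<subseteq> tau (n+1) ` F"
    proof
      fix i assume "i \<in> \<tau>"
      then have "tau (n+1) i \<in> F" using F(2) by blast
      then have "tau (n+1) (tau (n+1) i) \<in> tau (n+1) ` F" by (rule imageI)
      then show "i \<in> tau (n+1) ` F" by simp
    qed
    ultimately show False using assms(1) unfolding nonface_def B_face_def by blast
  qed
  ultimately show ?thesis unfolding nonface_def by blast
qed

lemma sig_IB: assumes "n \<ge> 1" "(a::'k::comm_ring_1 mpoly) \<in> I_B n" shows "sig (n+1) a \<in> I_B n"
  unfolding I_B_alt
proof (rule sig_gen_ideal[OF _ assms(2)[unfolded I_B_alt]])
  fix g :: "'k mpoly" assume "g \<in> {(\<Prod>i\<in>\<tau>. Var i) | \<tau>. nonface n \<tau>}"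
  then obtain \<tau> where t: "nonface n \<tau>" "g = (\<Prod>i\<in>\<tau>. Var i)" by blast
  have "sig (n+1) g = (\<Prod>i\<in>\<tau>. Var (tau (n+1) i))" using t(2) by (simp add: sig_prod sig_Var)
  also have "\<dots> = (\<Prod>i\<in>tau (n+1) ` \<tau>. Var i)"
    by (subst prod.reindex) (auto intro: inj_on_subset[OF inj_tau])
  finally show "sig (n+1) g \<in> {(\<Prod>i\<in>\<tau>. Var i) | \<tau>. nonface n \<tau>}"
    using nonface_tau[OF t(1) assms(1)] by blast
qed

lemma sig_ideal_power:
  assumes "\<And>x. x \<in> I \<Longrightarrow> sig N x \<in> I" "(a::'k::comm_ring_1 mpoly) \<in> ideal_power N I m"
  shows "sig N a \<in> ideal_power N I m"
  unfolding ideal_power_def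
proof (rule sig_gen_ideal[OF _ assms(2)[unfolded ideal_power_def]])
  fix g assume "g \<in> {prod_list l | l. length l = m \<and> set l \<subseteq> I}"
  then obtain l where "g = prod_list l" "length l = m" "set l \<subseteq> I" by blast
  then have "sig N g = prod_list (map (sig N) l)" "length (map (sig N) l) = m" "set (map (sig N) l) \<subseteq> I"
    using assms(1) by (auto simp: sig_prod_list)
  then show "sig N g \<in> {prod_list l | l. length l = m \<and> set l \<subseteq> I}" by blast
qed

lemma Ass_sig:
  assumes "n \<ge> 1" "P \<in> Ass (n+1) (I_B n :: 'k::comm_ring_1 mpoly set)"
  shows "{x \<in> polyring (n+1). sig (n+1) x \<in> P} \<in> Ass (n+1) (I_B n)"
proof -
  let ?N = "n+1"
  let ?Q = "{x \<in> polyring ?N. sig ?N x \<in> P}"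
  obtain r where pr: "is_prime_ideal ?N P" and r: "r \<in> polyring ?N"
    and P: "P = {a \<in> polyring ?N. a * r \<in> I_B n}"
    using assms(2) unfolding Ass_def by blast
  have PI: "is_ideal ?N P" "P \<noteq> polyring ?N"
    "\<And>a b. a \<in> polyring ?N \<Longrightarrow> b \<in> polyring ?N \<Longrightarrow> a * b \<in> P \<Longrightarrow> a \<in> P \<or> b \<in> P"
    using pr unfolding is_prime_ideal_def by blast+
  have Psub: "P \<subseteq> polyring ?N" using PI(1) unfolding is_ideal_def by blast
  have "is_ideal ?N ?Q" unfolding is_ideal_def
  proof (intro conjI ballI)
    show "?Q \<subseteq> polyring ?N" by blast
    show "0 \<in> ?Q" using PI(1) polyring_zero unfolding is_ideal_def by auto
  next
    fix a b :: "'k mpoly" assume "a \<in> ?Q" "b \<in> ?Q" then show "a + b \<in> ?Q"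
      using PI(1) polyring_add unfolding is_ideal_def by (auto simp: sig_add)
  next
    fix x a :: "'k mpoly" assume x: "x \<in> polyring ?N" and a: "a \<in> ?Q"
    have "sig ?N x * sig ?N a \<in> P" using PI(1) sig_polyring[OF x] a unfolding is_ideal_def by blast
    then show "x * a \<in> ?Q" using polyring_mult[OF x] a by (simp add: sig_mult)
  qed
  moreover have "?Q \<noteq> polyring ?N"
  proof
    assume E: "?Q = polyring ?N"
    obtain x where "x \<in> polyring ?N" "x \<notin> P" using PI(2) Psub by blast
    then show False using E sig_polyring[of x ?N] by (metis (no_types, lifting) mem_Collect_eq sig_sig)
  qed
  moreover have "a \<in> ?Q \<or> b \<in> ?Q" if "a \<in> polyring ?N" "b \<in> polyring ?N" "a * b \<in> ?Q" for a b
    using that PI(3)[of "sig ?N a" "sig ?N b"] sig_polyring by (auto simp: sig_mult)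
  ultimately have "is_prime_ideal ?N ?Q" unfolding is_prime_ideal_def by blast
  moreover have "?Q = {a \<in> polyring ?N. a * sig ?N r \<in> I_B n}"
  proof (intro set_eqI iffI)
    fix x assume "x \<in> ?Q"
    then have "x \<in> polyring ?N" "sig ?N x * r \<in> I_B n" using P by auto
    then show "x \<in> {a \<in> polyring ?N. a * sig ?N r \<in> I_B n}"
      using sig_IB[OF assms(1), of "sig ?N x * r"] by (simp add: sig_mult)
  next
    fix x assume "x \<in> {a \<in> polyring ?N. a * sig ?N r \<in> I_B n}"
    then have "x \<in> polyring ?N" "sig ?N (x * sig ?N r) \<in> I_B n" using sig_IB[OF assms(1)] by auto
    then show "x \<in> ?Q" using P sig_polyring by (auto simp: sig_mult)
  qed
  ultimately show ?thesis unfolding Ass_def using sig_polyring[OF r] by blast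
qed

lemma monom_split:
  assumes "j \<le> N" "b j \<le> c j" "\<And>i. i \<noteq> j \<Longrightarrow> c i = b i"
  shows "(monom N c :: 'k::comm_ring_1 mpoly) = monom N b * Var j ^ (c j - b j)"
proof -
  have j: "j \<in> {0..N}" using assms(1) by simp
  have "monom N c = Var j ^ c j * (\<Prod>i\<in>{0..N} - {j}. Var i ^ c i)"
    unfolding monom_def using prod.remove[OF _ j] by simp
  also have "(\<Prod>i\<in>{0..N} - {j}. Var i ^ c i) = (\<Prod>i\<in>{0..N} - {j}. (Var i ^ b i :: 'k mpoly))"
    using assms(3) by (intro prod.cong) auto
  also have "Var j ^ c j = (Var j ^ b j * Var j ^ (c j - b j) :: 'k mpoly)"
    using assms(2) by (simp add: power_add[symmetric])
  finally have "monom N c = Var j ^ b j * (\<Prod>i\<in>{0..N} - {j}. (Var i ^ b i :: 'k mpoly)) * Var j ^ (c j - b j)"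
    by (simp add: ac_simps)
  also have "Var j ^ b j * (\<Prod>i\<in>{0..N} - {j}. (Var i ^ b i :: 'k mpoly)) = monom N b"
    unfolding monom_def by (simp add: prod.remove[OF _ j])
  finally show ?thesis .
qed

lemma lemmaX:
  assumes pr: "is_prime_ideal N P" and j: "j \<le> N" "Var j \<notin> P"
    and bc: "b j \<le> c j" "\<And>i. i \<noteq> j \<Longrightarrow> c i = b i"
    and s: "s \<in> polyring N" "s \<notin> P" "s * monom N c \<in> J"
  shows "\<exists>s' \<in> polyring N - P. s' * (monom N b :: 'k::comm_ring_1 mpoly) \<in> J"
proof -
  let ?s = "s * (Var j :: 'k mpoly) ^ (c j - b j)"
  have p: "(Var j :: 'k mpoly) ^ (c j - b j) \<in> polyring N" "(Var j :: 'k mpoly) ^ (c j - b j) \<notin> P"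
    using polyring_power polyring_Var[OF j(1)] prime_power[OF pr _ j(2)] by auto
  then have s1: "?s \<in> polyring N" "?s \<notin> P"
    using s pr unfolding is_prime_ideal_def by (auto intro: polyring_mult)
  moreover have s2: "?s * monom N b = s * monom N c"
  proof -
    have e: "monom N c = monom N b * (Var j :: 'k mpoly) ^ (c j - b j)"
      by (rule monom_split[of j N b c, OF j(1) bc])
    have "?s * monom N b = s * (monom N b * (Var j :: 'k mpoly) ^ (c j - b j))"
      by (simp only: mult.assoc mult.commute[of "monom N b"])
    then show ?thesis using e by simp
  qed
  show ?thesis
  proof (rule bexI[of _ ?s])
    show "?s * monom N b \<in> J" unfolding s2 by (rule s(3))
    show "?s \<in> polyring N - P" using s1 by blast
  qed
qed


theorem lemma3p8:
  fixes n m :: nat and a :: "nat \<Rightarrow> nat"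
  assumes "n \<ge> 3" and "m \<ge> 1"
    and "(monom (n + 1) a :: 'k::field mpoly) \<in> symbolic_power (n + 1) (I_B n) m"
  shows "(monom (n + 1) (a(0 := min (a 0) (a (n + 1)), n + 1 := min (a 0) (a (n + 1)))) :: 'k mpoly)
           \<in> symbolic_power (n + 1) (I_B n) m"
proof -
  let ?N = "n+1"
  define t where "t = min (a 0) (a ?N)"
  define b where "b = a(0 := t, ?N := t)"
  have n1: "n \<ge> 1" using assms(1) by simp
  have hyp: "\<And>P. P \<in> Ass ?N (I_B n) \<Longrightarrow> \<exists>s \<in> polyring ?N - P. s * (monom ?N a :: 'k mpoly) \<in> ideal_power ?N (I_B n) m"
    using assms(3) unfolding symbolic_power_def by blast
  have "\<exists>s \<in> polyring ?N - P. s * (monom ?N b :: 'k mpoly) \<in> ideal_power ?N (I_B n) m"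
    if P: "P \<in> Ass ?N (I_B n)" for P
  proof -
    have pr: "is_prime_ideal ?N P" using P unfolding Ass_def by blast
    obtain j where j: "j = 0 \<or> j = ?N" "Var j \<notin> P" using Ass_not_both[OF n1 P] by blast
    define j' where "j' = tau ?N j"
    have jj: "j' \<noteq> j" "j \<le> ?N" "j' = 0 \<or> j' = ?N" "\<And>i. i \<noteq> j \<Longrightarrow> i \<noteq> j' \<Longrightarrow> tau ?N i = i"
      using j unfolding j'_def tau_def by auto
    have bj: "b j = t" "b j' = t" "\<And>i. i \<noteq> j \<Longrightarrow> i \<noteq> j' \<Longrightarrow> b i = a i"
      using jj j unfolding b_def by auto
    show ?thesis
    proof (cases "a j' \<le> a j")
      case True
      then have "a j' = t" "t \<le> a j" using j jj unfolding t_def j'_def tau_def by auto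
      then have bc: "b j \<le> a j" "\<And>i. i \<noteq> j \<Longrightarrow> a i = b i"
      proof -
        show "b j \<le> a j" using bj(1) \<open>t \<le> a j\<close> by simp
        fix i assume "i \<noteq> j"
        show "a i = b i"
        proof (cases "i = j'")
          case True then show ?thesis using bj(2) \<open>a j' = t\<close> by simp
        next
          case False then show ?thesis using bj(3) \<open>i \<noteq> j\<close> by simp
        qed
      qed
      obtain s where "s \<in> polyring ?N - P" "s * monom ?N a \<in> ideal_power ?N (I_B n) m"
        using hyp[OF P] by blast
      then show ?thesis using lemmaX[where b=b and c=a, OF pr jj(2) j(2) bc] by blast
    next
      case False
      define c where "c = a \<circ> tau ?N"
      have tj: "tau ?N j' = j" unfolding j'_def by simp
      have "a j = t" "t \<le> a j'" using False j jj unfolding t_def j'_def tau_def by auto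
      have cj: "c j = a j'" unfolding c_def j'_def by simp
      have cj': "c j' = a j" unfolding c_def using tj by simp
      have ci: "\<And>i. i \<noteq> j \<Longrightarrow> i \<noteq> j' \<Longrightarrow> c i = a i" unfolding c_def using jj(4) by simp
      have bc: "b j \<le> c j" "\<And>i. i \<noteq> j \<Longrightarrow> c i = b i"
      proof -
        show "b j \<le> c j" using bj(1) cj \<open>t \<le> a j'\<close> by simp
        fix i assume "i \<noteq> j"
        show "c i = b i"
        proof (cases "i = j'")
          case True then show ?thesis using bj(2) cj' \<open>a j = t\<close> by simp
        next
          case False then show ?thesis using bj(3) ci \<open>i \<noteq> j\<close> by simp
        qed
      qed
      obtain s where s: "s \<in> polyring ?N" "s \<notin> {x \<in> polyring ?N. sig ?N x \<in> P}"
          "s * monom ?N a \<in> ideal_power ?N (I_B n) m"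
        using hyp[OF Ass_sig[OF n1 P]] by blast
      have "sig ?N s \<in> polyring ?N" "sig ?N s \<notin> P" using s sig_polyring by auto
      moreover have "sig ?N s * monom ?N c \<in> ideal_power ?N (I_B n) m"
        using sig_ideal_power[OF sig_IB[OF n1] s(3)] by (simp add: sig_mult sig_monom c_def)
      ultimately show ?thesis using lemmaX[where b=b and c=c, OF pr jj(2) j(2) bc] by blast
    qed
  qed
  then show ?thesis using polyring_monom unfolding symbolic_power_def b_def t_def by blast
qed

end
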